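(* There is no finite T2R semigroup.
   Context: A semigroup $S$ is a $\Delta$-semigroup if the lattice of all congruences of $S$ is a chain with respect to inclusion. A semigroup $N$ with zero $0$ is nil if every element has some power equal to $0$; non-trivial means having more than one element. A T2R semigroup is a $\Delta$-semigroup $S$ which is the disjoint union of a non-trivial nil ideal $S_0$ (with zero $0$, which is then the zero of $S$) and a subsemigroup $S_1=\{u,v\}$, $u\neq v$, which is a right zero semigroup ($xy=y$ for $x,y\in S_1$). *)

theory Defs
  imports Main
begin

definition semigroup_on :: "'a set \<Rightarrow> ('a \<Rightarrow> 'a \<Rightarrow> 'a) \<Rightarrow> bool" where
  "semigroup_on S m \<longleftrightarrow>
     (\<forall>x\<in>S. \<forall>y\<in>S. m x y \<in> S) \<and>
     (\<forall>x\<in>S. \<forall>y\<in>S. \<forall>z\<in>S. m (m x y) z = m x (m y z))"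

definition congruence_on :: "'a set \<Rightarrow> ('a \<Rightarrow> 'a \<Rightarrow> 'a) \<Rightarrow> 'a rel \<Rightarrow> bool" where
  "congruence_on S m R \<longleftrightarrow> equiv S R \<and>
     (\<forall>a\<in>S. \<forall>b\<in>S. \<forall>c\<in>S. (a, b) \<in> R \<longrightarrow> (m c a, m c b) \<in> R \<and> (m a c, m b c) \<in> R)"

definition delta_semigroup :: "'a set \<Rightarrow> ('a \<Rightarrow> 'a \<Rightarrow> 'a) \<Rightarrow> bool" where
  "delta_semigroup S m \<longleftrightarrow> semigroup_on S m \<and>
     (\<forall>R1 R2. congruence_on S m R1 \<and> congruence_on S m R2 \<longrightarrow> R1 \<subseteq> R2 \<or> R2 \<subseteq> R1)"

text \<open>Positive powers: spow m x n = x^(n+1).\<close>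

fun spow :: "('a \<Rightarrow> 'a \<Rightarrow> 'a) \<Rightarrow> 'a \<Rightarrow> nat \<Rightarrow> 'a" where
  "spow m x 0 = x"
| "spow m x (Suc n) = m x (spow m x n)"

definition nil_with_zero :: "'a set \<Rightarrow> ('a \<Rightarrow> 'a \<Rightarrow> 'a) \<Rightarrow> 'a \<Rightarrow> bool" where
  "nil_with_zero N m z \<longleftrightarrow> z \<in> N \<and>
     (\<forall>x\<in>N. m z x = z \<and> m x z = z) \<and>
     (\<forall>x\<in>N. \<exists>n. spow m x n = z)"

definition ideal_on :: "'a set \<Rightarrow> ('a \<Rightarrow> 'a \<Rightarrow> 'a) \<Rightarrow> 'a set \<Rightarrow> bool" where
  "ideal_on S m I \<longleftrightarrow> I \<subseteq> S \<and> I \<noteq> {} \<and>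
     (\<forall>s\<in>S. \<forall>x\<in>I. m s x \<in> I \<and> m x s \<in> I)"

definition T2R :: "'a set \<Rightarrow> ('a \<Rightarrow> 'a \<Rightarrow> 'a) \<Rightarrow> bool" where
  "T2R S m \<longleftrightarrow> delta_semigroup S m \<and>
     (\<exists>S0 z u v. S = S0 \<union> {u, v} \<and> S0 \<inter> {u, v} = {} \<and> u \<noteq> v \<and>
        ideal_on S m S0 \<and> nil_with_zero S0 m z \<and> (\<exists>x\<in>S0. x \<noteq> z) \<and>
        (\<forall>x\<in>{u, v}. \<forall>y\<in>{u, v}. m x y = y))"

end

theory Submission
  imports Defs
begin

locale t2rctx =
  fixes S :: "'a set" and m :: "'a \<Rightarrow> 'a \<Rightarrow> 'a" and S0 :: "'a set" and z u v :: 'a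
  assumes fin: "finite S"
    and sg: "semigroup_on S m"
    and delta: "\<And>R1 R2. congruence_on S m R1 \<Longrightarrow> congruence_on S m R2 \<Longrightarrow> R1 \<subseteq> R2 \<or> R2 \<subseteq> R1"
    and SS: "S = S0 \<union> {u, v}" and disj: "S0 \<inter> {u, v} = {}" and uv: "u \<noteq> v"
    and idl: "ideal_on S m S0" and nil: "nil_with_zero S0 m z" and nt: "\<exists>x\<in>S0. x \<noteq> z"
    and rz: "\<forall>x\<in>{u, v}. \<forall>y\<in>{u, v}. m x y = y"
begin

lemma clos: "x \<in> S \<Longrightarrow> y \<in> S \<Longrightarrow> m x y \<in> S"
  using sg unfolding semigroup_on_def by blast

lemma assoc: "x \<in> S \<Longrightarrow> y \<in> S \<Longrightarrow> w \<in> S \<Longrightarrow> m (m x y) w = m x (m y w)"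
  using sg unfolding semigroup_on_def by blast

lemma S0S: "S0 \<subseteq> S" using SS by blast
lemma S0D: "x \<in> S0 \<Longrightarrow> x \<in> S" using SS by blast
lemma uS: "u \<in> S" and vS: "v \<in> S" using SS by auto
lemma uN: "u \<notin> S0" and vN: "v \<notin> S0" using disj by auto

lemma idL: "s \<in> S \<Longrightarrow> x \<in> S0 \<Longrightarrow> m s x \<in> S0"
  and idR: "s \<in> S \<Longrightarrow> x \<in> S0 \<Longrightarrow> m x s \<in> S0"
  using idl unfolding ideal_on_def by auto

lemma zS0: "z \<in> S0" using nil unfolding nil_with_zero_def by auto

lemma z0: "x \<in> S0 \<Longrightarrow> m z x = z" "x \<in> S0 \<Longrightarrow> m x z = z"
  using nil unfolding nil_with_zero_def by auto

lemma nilp: "x \<in> S0 \<Longrightarrow> \<exists>n. spow m x n = z"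
  using nil unfolding nil_with_zero_def by auto

lemma Scases: "s \<in> S \<Longrightarrow> s \<in> S0 \<or> s = u \<or> s = v" using SS by auto

lemma zero: assumes "s \<in> S" shows "m z s = z" "m s z = z"
proof -
  have "m z s \<in> S0" using idR[OF assms zS0] .
  hence "m z (m z s) = z" using z0 by auto
  thus "m z s = z" using assoc[OF _ _ assms, of z z] zS0 S0S z0(1)[OF zS0] by auto
  have "m s z \<in> S0" using idL[OF assms zS0] .
  hence "m (m s z) z = z" using z0 by auto
  thus "m s z = z" using assoc[OF assms, of z z] zS0 S0S z0(1)[OF zS0] by auto
qed


definition rees :: "'a set \<Rightarrow> 'a rel" where
  "rees I = {(a,b). a \<in> S \<and> b \<in> S \<and> (a = b \<or> a \<in> I \<and> b \<in> I)}"

lemma rees_cong: assumes "ideal_on S m I" shows "congruence_on S m (rees I)"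
proof -
  have I: "I \<subseteq> S" "\<And>s x. s \<in> S \<Longrightarrow> x \<in> I \<Longrightarrow> m s x \<in> I \<and> m x s \<in> I"
    using assms unfolding ideal_on_def by auto
  have e: "equiv S (rees I)" unfolding equiv_def refl_on_def sym_def trans_def rees_def
    by auto
  have c: "\<forall>a\<in>S. \<forall>b\<in>S. \<forall>c\<in>S. (a, b) \<in> rees I \<longrightarrow> (m c a, m c b) \<in> rees I \<and> (m a c, m b c) \<in> rees I"
  proof (intro ballI impI)
    fix a b c assume abc: "a \<in> S" "b \<in> S" "c \<in> S" and r: "(a, b) \<in> rees I"
    have "a = b \<or> a \<in> I \<and> b \<in> I" using r unfolding rees_def by auto
    thus "(m c a, m c b) \<in> rees I \<and> (m a c, m b c) \<in> rees I"
      unfolding rees_def using I(2)[OF abc(3)] clos abc by auto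
  qed
  show ?thesis unfolding congruence_on_def using e c by blast
qed

lemma z_ideal: assumes "ideal_on S m I" shows "z \<in> I"
proof -
  obtain y where y: "y \<in> I" using assms unfolding ideal_on_def by auto
  have "y \<in> S" using y assms unfolding ideal_on_def by auto
  hence "m z y \<in> I" using y assms zS0 S0S unfolding ideal_on_def by auto
  thus ?thesis using zero \<open>y \<in> S\<close> by auto
qed

lemma ideal_chain: assumes "ideal_on S m I1" "ideal_on S m I2" shows "I1 \<subseteq> I2 \<or> I2 \<subseteq> I1"
proof -
  have s: "I1 \<subseteq> S" "I2 \<subseteq> S" using assms unfolding ideal_on_def by auto
  have zz: "z \<in> I1" "z \<in> I2" using z_ideal assms by auto
  have "rees I1 \<subseteq> rees I2 \<or> rees I2 \<subseteq> rees I1" using delta rees_cong assms by blast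
  thus ?thesis
  proof
    assume h: "rees I1 \<subseteq> rees I2"
    have "I1 \<subseteq> I2"
    proof
      fix a assume a: "a \<in> I1"
      show "a \<in> I2"
      proof (cases "a = z")
        case False
        hence "(a, z) \<in> rees I1" using a zz s zS0 S0S unfolding rees_def by auto
        hence "(a, z) \<in> rees I2" using h by auto
        thus ?thesis using False unfolding rees_def by auto
      qed (use zz in auto)
    qed
    thus ?thesis by auto
  next
    assume h: "rees I2 \<subseteq> rees I1"
    have "I2 \<subseteq> I1"
    proof
      fix a assume a: "a \<in> I2"
      show "a \<in> I1"
      proof (cases "a = z")
        case False
        hence "(a, z) \<in> rees I2" using a zz s zS0 S0S unfolding rees_def by auto
        hence "(a, z) \<in> rees I1" using h by auto
        thus ?thesis using False unfolding rees_def by auto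
      qed (use zz in auto)
    qed
    thus ?thesis by auto
  qed
qed

lemma exM: "\<exists>M. ideal_on S m M \<and> M \<subset> S0 \<and> (\<forall>I. ideal_on S m I \<and> I \<subset> S0 \<longrightarrow> I \<subseteq> M)"
proof -
  let ?F = "{I. ideal_on S m I \<and> I \<subset> S0}"
  have "?F \<subseteq> Pow S" unfolding ideal_on_def by auto
  hence f: "finite ?F" using fin by (meson finite_Pow_iff finite_subset)
  have "ideal_on S m {z}" unfolding ideal_on_def using zS0 S0S zero by auto
  moreover have "{z} \<subset> S0" using nt zS0 by auto
  ultimately have ne: "?F \<noteq> {}" by (metis (mono_tags, lifting) empty_iff mem_Collect_eq)
  obtain M where M: "M \<in> ?F" "\<forall>b\<in>?F. M \<le> b \<longrightarrow> M = b" using finite_has_maximal[OF f ne] by blast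
  have "\<forall>I. ideal_on S m I \<and> I \<subset> S0 \<longrightarrow> I \<subseteq> M"
  proof (intro allI impI)
    fix I assume I: "ideal_on S m I \<and> I \<subset> S0"
    have "I \<subseteq> M \<or> M \<subseteq> I" using ideal_chain I M(1) by blast
    moreover have "M \<subseteq> I \<Longrightarrow> M = I" using M(2) I by auto
    ultimately show "I \<subseteq> M" by auto
  qed
  thus ?thesis using M(1) by auto
qed


lemma spow_S0: "w \<in> S0 \<Longrightarrow> spow m w n \<in> S0"
  by (induction n) (auto intro: idL S0S[THEN subsetD])

lemma spow_fix: assumes w: "w \<in> S0" and y: "y \<in> S0" and e: "y = m w y"
  shows "y = m (spow m w n) y"
proof (induction n)
  case 0 then show ?case using e by simp
next
  case (Suc n)
  have "m (spow m w (Suc n)) y = m w (m (spow m w n) y)"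
    using assoc[of w "spow m w n" y] w y spow_S0[OF w] S0S by auto
  also have "\<dots> = y" using Suc e by simp
  finally show ?case by simp
qed

lemma fix_zero: assumes w: "w \<in> S0" and y: "y \<in> S0" and e: "y = m w y" shows "y = z"
proof -
  obtain n where "spow m w n = z" using nilp w by blast
  thus ?thesis using spow_fix[OF w y e, of n] z0 y by auto
qed

lemma not_sq: "\<not> (\<forall>t\<in>S0. \<exists>a\<in>S0. \<exists>b\<in>S0. t = m a b)"
proof
  assume H: "\<forall>t\<in>S0. \<exists>a\<in>S0. \<exists>b\<in>S0. t = m a b"
  have "\<forall>t\<in>S0. \<exists>p. p \<in> S0 \<times> S0 \<and> t = m (fst p) (snd p)"
  proof
    fix t assume "t \<in> S0"
    then obtain a b where "a \<in> S0" "b \<in> S0" "t = m a b" using H by blast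
    hence "(a, b) \<in> S0 \<times> S0 \<and> t = m (fst (a, b)) (snd (a, b))" by simp
    thus "\<exists>p. p \<in> S0 \<times> S0 \<and> t = m (fst p) (snd p)" by (rule exI)
  qed
  then obtain F where F: "\<forall>t\<in>S0. F t \<in> S0 \<times> S0 \<and> t = m (fst (F t)) (snd (F t))"
    by (rule bchoice[THEN exE])
  define f where "f = (\<lambda>t. fst (F t))"
  define g where "g = (\<lambda>t. snd (F t))"
  have fg: "\<And>t. t \<in> S0 \<Longrightarrow> f t \<in> S0 \<and> g t \<in> S0 \<and> t = m (f t) (g t)"
  proof -
    fix t assume "t \<in> S0"
    hence "F t \<in> S0 \<times> S0" "t = m (fst (F t)) (snd (F t))" using F by auto
    thus "f t \<in> S0 \<and> g t \<in> S0 \<and> t = m (f t) (g t)" unfolding f_def g_def by auto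
  qed
  have gS: "\<And>t. t \<in> S0 \<Longrightarrow> g t \<in> S0" using fg by blast
  have gi: "y \<in> S0 \<Longrightarrow> (g^^k) y \<in> S0" for y k
    by (induction k) (auto simp: gS)
  have it: "y \<in> S0 \<Longrightarrow> \<exists>w\<in>S0. y = m w ((g^^(Suc k)) y)" for y k
  proof (induction k)
    case 0 then show ?case using fg by (metis funpow_0 funpow_simps_right(2) o_apply)
  next
    case (Suc k)
    then obtain w where w: "w \<in> S0" "y = m w ((g^^(Suc k)) y)" by blast
    let ?q = "(g^^(Suc k)) y"
    have q: "?q \<in> S0" using gi Suc by blast
    have e1: "y = m w (m (f ?q) (g ?q))" using w fg[OF q] by metis
    have e2: "m (m w (f ?q)) (g ?q) = m w (m (f ?q) (g ?q))"
      using assoc[of w "f ?q" "g ?q"] w fg[OF q] S0S by blast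
    have gg: "(g^^(Suc (Suc k))) y = g ?q" by simp
    have "y = m (m w (f ?q)) (g ?q)" using e1 e2 by metis
    hence "y = m (m w (f ?q)) ((g^^(Suc (Suc k))) y)" using gg by metis
    moreover have "m w (f ?q) \<in> S0" using w fg[OF q] idL S0S by auto
    ultimately show ?case by blast
  qed
  obtain t where t: "t \<in> S0" "t \<noteq> z" using nt by blast
  let ?h = "\<lambda>n. (g^^n) t"
  have "?h ` UNIV \<subseteq> S0" using gi t by auto
  moreover have "finite S0" using fin S0S by (rule finite_subset[rotated])
  ultimately have "finite (?h ` UNIV)" by (rule finite_subset)
  then obtain n0 where n0': "n0 \<in> (UNIV::nat set)" "\<not> finite {n \<in> UNIV. ?h n = ?h n0}"
    using pigeonhole_infinite[of "UNIV :: nat set" ?h] infinite_UNIV_nat by blast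
  have n0: "\<not> finite {n. ?h n = ?h n0}" using n0' by simp
  then obtain j where j: "j > n0" "?h j = ?h n0"
  proof -
    have "\<not> ({n. ?h n = ?h n0} \<subseteq> {..<Suc n0})"
    proof
      assume "{n. ?h n = ?h n0} \<subseteq> {..<Suc n0}"
      hence "finite {n. ?h n = ?h n0}" by (rule finite_subset) simp
      thus False using n0 by contradiction
    qed
    then obtain j where "j \<in> {n. ?h n = ?h n0}" "j \<notin> {..<Suc n0}" by blast
    hence "n0 < j" "?h j = ?h n0" by auto
    thus ?thesis by (rule that)
  qed
  obtain k where k: "j = Suc k + n0" using j(1)
  proof -
    have "j = Suc (j - Suc n0) + n0" using j(1) by simp
    thus ?thesis by (rule that)
  qed
  let ?y = "?h n0"
  have y: "?y \<in> S0" using gi t by blast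
  have hj: "?h j = (g^^(Suc k)) ?y" using k by (simp add: funpow_add)
  obtain w where w0: "w \<in> S0" "?y = m w ((g^^(Suc k)) ?y)" using it[OF y, of k] by blast
  have w: "w \<in> S0" "?y = m w ?y" using w0 hj j(2) by metis+
  have yz: "?y = z" using fix_zero[OF w(1) y w(2)] .
  show False
  proof (cases n0)
    case 0 then show ?thesis using yz t by simp
  next
    case (Suc k')
    then obtain w' where w': "w' \<in> S0" "t = m w' ((g^^(Suc k')) t)" using it[OF t(1), of k'] by blast
    have "t = m w' z" using w'(2) yz Suc by simp
    thus ?thesis using z0(2)[OF w'(1)] t by simp
  qed
qed

lemma rzs: "m u u = u" "m u v = v" "m v u = u" "m v v = v" using rz by auto

end

locale t2rM = t2rctx +
  fixes M :: "'a set"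
  assumes Mid: "ideal_on S m M" and Msub: "M \<subset> S0"
    and Mmax: "\<And>I. ideal_on S m I \<Longrightarrow> I \<subset> S0 \<Longrightarrow> I \<subseteq> M"
begin

lemma MS0: "M \<subseteq> S0" using Msub by auto

lemma MI: "s \<in> S \<Longrightarrow> x \<in> M \<Longrightarrow> m s x \<in> M" "s \<in> S \<Longrightarrow> x \<in> M \<Longrightarrow> m x s \<in> M"
  using Mid unfolding ideal_on_def by auto

lemma sqM: assumes a: "a \<in> S0" and b: "b \<in> S0" shows "m a b \<in> M"
proof -
  let ?N = "{m a b |a b. a \<in> S0 \<and> b \<in> S0}"
  have NS0: "?N \<subseteq> S0" using idL S0S by blast
  have "ideal_on S m ?N" unfolding ideal_on_def
  proof (intro conjI ballI)
    show "?N \<subseteq> S" using NS0 S0S by blast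
    show "?N \<noteq> {}" using zS0 by blast
    fix s x assume s: "s \<in> S" and x: "x \<in> ?N"
    then obtain c d where cd: "c \<in> S0" "d \<in> S0" "x = m c d" by blast
    have "m s x = m (m s c) d" using assoc[of s c d] s cd S0D by auto
    moreover have "m s c \<in> S0" using idL s cd by blast
    ultimately show "m s x \<in> ?N" using cd by blast
    have "m x s = m c (m d s)" using assoc[of c d s] s cd S0D by auto
    moreover have "m d s \<in> S0" using idR s cd by blast
    ultimately show "m x s \<in> ?N" using cd by blast
  qed
  moreover have "?N \<noteq> S0"
  proof
    assume "?N = S0"
    hence "\<forall>t\<in>S0. \<exists>a\<in>S0. \<exists>b\<in>S0. t = m a b" by blast
    thus False using not_sq by blast
  qed
  ultimately have "?N \<subseteq> M" using Mmax NS0 by blast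
  thus ?thesis using a b by blast
qed

definition Jset :: "'a \<Rightarrow> 'a set" where
  "Jset a = {a} \<union> {m s a |s. s \<in> S} \<union> {m a t |t. t \<in> S} \<union> {m (m s a) t |s t. s \<in> S \<and> t \<in> S}"

lemma Jset_S0: assumes a: "a \<in> S0" shows "Jset a \<subseteq> S0"
  unfolding Jset_def using a idL idR clos S0S by blast

lemma Jset_mult: assumes a: "a \<in> S0" and s: "s \<in> S" and y: "y \<in> Jset a"
  shows "m s y \<in> Jset a \<and> m y s \<in> Jset a"
proof -
  have aS: "a \<in> S" using a S0S by blast
  from y consider "y = a" | s' where "s' \<in> S" "y = m s' a" | t where "t \<in> S" "y = m a t"
    | s' t where "s' \<in> S" "t \<in> S" "y = m (m s' a) t"
    unfolding Jset_def by blast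
  then show "m s y \<in> Jset a \<and> m y s \<in> Jset a"
  proof cases
    case 1 then show ?thesis unfolding Jset_def using s by blast
  next
    case (2 s')
    have "m s y = m (m s s') a" using assoc[of s s' a] s 2 aS by auto
    moreover have "m s s' \<in> S" using clos s 2 by blast
    moreover have "m y s = m (m s' a) s" using 2 by simp
    ultimately show ?thesis unfolding Jset_def using s 2 by blast
  next
    case (3 t)
    have "m s y = m (m s a) t" using assoc[of s a t] s 3 aS by auto
    moreover have "m y s = m a (m t s)" using assoc[of a t s] s 3 aS by auto
    moreover have "m t s \<in> S" using clos s 3 by blast
    ultimately show ?thesis unfolding Jset_def using s 3 by blast
  next
    case (4 s' t)
    have sa: "m s' a \<in> S" using clos 4 aS by blast
    have "m s y = m (m s (m s' a)) t" using assoc[of s "m s' a" t] s 4 sa by auto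
    also have "m s (m s' a) = m (m s s') a" using assoc[of s s' a] s 4 aS by auto
    finally have e1: "m s y = m (m (m s s') a) t" .
    have e2: "m y s = m (m s' a) (m t s)" using assoc[of "m s' a" t s] s 4 sa by auto
    have "m s s' \<in> S" "m t s \<in> S" using clos s 4 by blast+
    thus ?thesis unfolding Jset_def using e1 e2 s 4 by blast
  qed
qed

lemma Jset_ideal: assumes a: "a \<in> S0" shows "ideal_on S m (Jset a)"
proof -
  have "Jset a \<subseteq> S" using Jset_S0[OF a] S0S by blast
  moreover have "Jset a \<noteq> {}" unfolding Jset_def by blast
  ultimately show ?thesis unfolding ideal_on_def using Jset_mult[OF a] by blast
qed

lemma Jset_top: assumes a: "a \<in> S0" "a \<notin> M" shows "Jset a = S0"
proof (rule ccontr)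
  assume "Jset a \<noteq> S0"
  hence "Jset a \<subset> S0" using Jset_S0[OF a(1)] by blast
  hence "Jset a \<subseteq> M" using Mmax Jset_ideal[OF a(1)] by blast
  moreover have "a \<in> Jset a" unfolding Jset_def by blast
  ultimately show False using a by blast
qed

lemma Scases': "s \<in> S \<Longrightarrow> s \<notin> S0 \<Longrightarrow> s \<in> {u, v}" using SS by auto

lemma Jform: assumes a: "a \<in> S0" "a \<notin> M" and y: "y \<in> S0" "y \<notin> M"
  shows "y = a \<or> (\<exists>w\<in>{u,v}. y = m w a) \<or> (\<exists>t\<in>{u,v}. y = m a t) \<or> (\<exists>w\<in>{u,v}. \<exists>t\<in>{u,v}. y = m (m w a) t)"
proof -
  have aS: "a \<in> S" using a S0S by blast
  have "y \<in> Jset a" using Jset_top[OF a] y by blast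
  then consider "y = a" | s' where "s' \<in> S" "y = m s' a" | t where "t \<in> S" "y = m a t"
    | s' t where "s' \<in> S" "t \<in> S" "y = m (m s' a) t"
    unfolding Jset_def by blast
  then show ?thesis
  proof cases
    case 1 then show ?thesis by blast
  next
    case (2 s')
    have "s' \<notin> S0" using sqM[OF _ a(1)] 2 y by blast
    thus ?thesis using Scases' 2 by blast
  next
    case (3 t)
    have "t \<notin> S0" using sqM[OF a(1)] 3 y by blast
    thus ?thesis using Scases' 3 by blast
  next
    case (4 s' t)
    have "s' \<notin> S0"
    proof
      assume "s' \<in> S0"
      hence "m s' a \<in> M" using sqM a by blast
      hence "y \<in> M" using MI 4 by blast
      thus False using y by blast
    qed
    moreover have "t \<notin> S0"
    proof
      assume t: "t \<in> S0"
      have "y = m s' (m a t)" using assoc[of s' a t] 4 aS by auto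
      moreover have "m a t \<in> M" using sqM a t by blast
      ultimately have "y \<in> M" using MI 4 by auto
      thus False using y by blast
    qed
    ultimately show ?thesis using Scases' 4 by blast
  qed
qed

lemma uvS: "w \<in> {u, v} \<Longrightarrow> w \<in> S" using uS vS by auto

lemma ab: "w \<in> {u, v} \<Longrightarrow> w' \<in> {u, v} \<Longrightarrow> m w' w = w" using rz by blast

lemma lw: assumes "w \<in> {u, v}" "w' \<in> {u, v}" "x \<in> S" shows "m w' (m w x) = m w x"
  using assoc[of w' w x] uvS assms ab[of w w'] by auto

lemma L: assumes w: "w \<in> {u, v}" and c: "c \<in> S0" and nm: "m w c \<notin> M"
  shows "m u c = c \<and> m v c = c"
proof -
  let ?a = "m w c"
  have cS: "c \<in> S" using c S0D by blast
  have a: "?a \<in> S0" using idL uvS[OF w] c by blast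
  have aS: "?a \<in> S" using a S0D by blast
  have cM: "c \<notin> M" using MI(1)[OF uvS[OF w]] nm by blast
  have red: "c = ?a \<or> (\<exists>t\<in>{u,v}. c = m ?a t)"
  proof -
    have lw1: "\<And>w1. w1 \<in> {u,v} \<Longrightarrow> m w1 ?a = ?a" using lw[OF w _ cS] by blast
    from Jform[OF a nm c cM] show ?thesis using lw1 by metis
  qed
  have "m w' c = c" if w': "w' \<in> {u, v}" for w'
  proof -
    from red show ?thesis
    proof
      assume e: "c = ?a"
      have "m w' ?a = ?a" using lw[OF w w' cS] .
      thus ?thesis using e by simp
    next
      assume "\<exists>t\<in>{u,v}. c = m ?a t"
      then obtain t where t: "t \<in> {u,v}" "c = m ?a t" by blast
      have "m w' (m ?a t) = m (m w' ?a) t" using assoc[of w' ?a t] uvS[OF w'] uvS[OF t(1)] aS by auto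
      also have "m w' ?a = ?a" using lw[OF w w' cS] .
      finally show ?thesis using t(2) by simp
    qed
  qed
  thus ?thesis by blast
qed

lemma Left3: assumes x: "x \<in> S0" "x \<notin> M" and y: "y \<in> S0" "y \<notin> M" and s: "s \<in> {u, v}"
  and nm: "m s x \<notin> M" shows "m s y \<notin> M"
proof -
  have Lx: "\<And>w. w \<in> {u,v} \<Longrightarrow> m w x = x" using L[OF s x(1) nm] by blast
  have xS: "x \<in> S" using x S0D by blast
  have red: "y = x \<or> (\<exists>t\<in>{u,v}. y = m x t)"
    using Jform[OF x y] Lx by metis
  have "m s y = y"
    using red
  proof
    assume "y = x" thus ?thesis using Lx s by simp
  next
    assume "\<exists>t\<in>{u,v}. y = m x t"
    then obtain t where t: "t \<in> {u,v}" "y = m x t" by blast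
    have "m s (m x t) = m (m s x) t" using assoc[of s x t] uvS s t(1) xS by auto
    thus ?thesis using Lx[OF s] t(2) by simp
  qed
  thus ?thesis using y by simp
qed

lemma Right3: assumes x: "x \<in> S0" "x \<notin> M" and y: "y \<in> S0" "y \<notin> M" and s: "s \<in> {u, v}"
  and nm: "m x s \<notin> M" shows "m y s \<notin> M"
proof -
  have xS: "x \<in> S" using x S0D by blast
  have red: "y = x \<or> (\<exists>t\<in>{u,v}. y = m x t)"
  proof -
    from Jform[OF x y] consider "y = x" | w where "w \<in> {u,v}" "y = m w x"
      | t where "t \<in> {u,v}" "y = m x t" | w t where "w \<in> {u,v}" "t \<in> {u,v}" "y = m (m w x) t"
      by blast
    then show ?thesis
    proof cases
      case 1 then show ?thesis by blast
    next
      case (2 w)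
      have "m u x = x \<and> m v x = x" using L[OF 2(1) x(1)] 2 y by blast
      thus ?thesis using 2 by auto
    next
      case (3 t) then show ?thesis by blast
    next
      case (4 w t)
      have c: "m x t \<in> S0" using idR uvS[OF 4(2)] x(1) by blast
      have e: "y = m w (m x t)" using assoc[of w x t] uvS 4 xS by auto
      hence "m u (m x t) = m x t \<and> m v (m x t) = m x t" using L[OF 4(1) c] y by blast
      hence "y = m x t" using e 4(1) by auto
      thus ?thesis using 4 by blast
    qed
  qed
  have "m y s = m x s"
    using red
  proof
    assume "y = x" thus ?thesis by simp
  next
    assume "\<exists>t\<in>{u,v}. y = m x t"
    then obtain t where t: "t \<in> {u,v}" "y = m x t" by blast
    have "m (m x t) s = m x (m t s)" using assoc[of x t s] uvS s t(1) xS by auto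
    thus ?thesis using ab[OF s t(1)] t(2) by simp
  qed
  thus ?thesis using nm by simp
qed

lemma C1: assumes c: "c \<in> S0" shows "m c u \<in> M \<longleftrightarrow> m c v \<in> M"
proof -
  have cS: "c \<in> S" using c S0D by blast
  have "m c v = m (m c u) v" using assoc[of c u v] cS uS vS rzs by auto
  moreover have "m c u = m (m c v) u" using assoc[of c v u] cS uS vS rzs by auto
  ultimately show ?thesis using MI(2) uS vS by metis
qed

lemma C2: assumes c: "c \<in> S0" shows "m u c \<in> M \<longleftrightarrow> m v c \<in> M"
proof -
  have "m u c \<notin> M \<Longrightarrow> m u c = m v c" using L[of u c] c by auto
  moreover have "m v c \<notin> M \<Longrightarrow> m u c = m v c" using L[of v c] c by auto
  ultimately show ?thesis by metis
qed

definition theta :: "'a rel" where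
  "theta = {(a,b). a \<in> S \<and> b \<in> S \<and> (a = b \<or> a \<in> {u,v} \<and> b \<in> {u,v} \<or> a \<in> S0 \<and> b \<in> S0 \<and> (a \<in> M \<longleftrightarrow> b \<in> M))}"

lemma theta_equiv: "equiv S theta"
proof -
  have d: "\<And>x. x \<in> {u,v} \<Longrightarrow> x \<notin> S0" using uN vN by blast
  show ?thesis unfolding equiv_def refl_on_def sym_def trans_def theta_def
    using d by auto
qed

lemma theta_compat: assumes a: "a \<in> S" and b: "b \<in> S" and c: "c \<in> S" and r: "(a, b) \<in> theta"
  shows "(m c a, m c b) \<in> theta \<and> (m a c, m b c) \<in> theta"
proof -
  have ca: "m c a \<in> S" "m c b \<in> S" "m a c \<in> S" "m b c \<in> S" using clos a b c by blast+
  from r consider "a = b" | "a \<in> {u,v}" "b \<in> {u,v}" | "a \<in> S0" "b \<in> S0" "a \<in> M \<longleftrightarrow> b \<in> M"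
    unfolding theta_def by blast
  then show ?thesis
  proof cases
    case 1 then show ?thesis using ca unfolding theta_def by auto
  next
    case 2
    show ?thesis
    proof (cases "c \<in> S0")
      case True
      have i1: "m c a \<in> S0" "m c b \<in> S0" "m a c \<in> S0" "m b c \<in> S0" using idL idR True a b by blast+
      have "m c a \<in> M \<longleftrightarrow> m c b \<in> M" using C1[OF True] 2 by auto
      moreover have "m a c \<in> M \<longleftrightarrow> m b c \<in> M" using C2[OF True] 2 by auto
      ultimately show ?thesis using i1 ca unfolding theta_def by blast
    next
      case False
      hence cc: "c \<in> {u,v}" using Scases' c by blast
      have "m c a = a" "m c b = b" "m a c = c" "m b c = c" using ab 2 cc by blast+
      thus ?thesis using ca 2 unfolding theta_def by auto
    qed
  next
    case 3
    show ?thesis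
    proof (cases "c \<in> S0")
      case True
      have "m c a \<in> M" "m c b \<in> M" "m a c \<in> M" "m b c \<in> M" using sqM True 3 by blast+
      moreover have "m c a \<in> S0" "m c b \<in> S0" "m a c \<in> S0" "m b c \<in> S0" using idL idR True a b by blast+
      ultimately show ?thesis using ca unfolding theta_def by blast
    next
      case False
      hence cc: "c \<in> {u,v}" using Scases' c by blast
      have i1: "m c a \<in> S0" "m c b \<in> S0" "m a c \<in> S0" "m b c \<in> S0" using idL idR 3 c by blast+
      have "(m c a \<in> M \<longleftrightarrow> m c b \<in> M) \<and> (m a c \<in> M \<longleftrightarrow> m b c \<in> M)"
      proof (cases "a \<in> M")
        case True
        hence "b \<in> M" using 3 by blast
        thus ?thesis using True MI c by blast
      next
        case False
        hence bM: "b \<notin> M" using 3 by blast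
        show ?thesis using Left3[OF 3(1) False 3(2) bM cc] Left3[OF 3(2) bM 3(1) False cc]
            Right3[OF 3(1) False 3(2) bM cc] Right3[OF 3(2) bM 3(1) False cc] by blast
      qed
      thus ?thesis using i1 ca unfolding theta_def by blast
    qed
  qed
qed

lemma contra: False
proof -
  have c1: "congruence_on S m theta" unfolding congruence_on_def
    using theta_equiv theta_compat by blast
  have c2: "congruence_on S m (rees S0)" using rees_cong[OF idl] .
  have "(u, v) \<in> theta" unfolding theta_def using uS vS by blast
  moreover have "(u, v) \<notin> rees S0" unfolding rees_def using uv uN by blast
  ultimately have "rees S0 \<subseteq> theta" using delta[OF c1 c2] by blast
  obtain x where x: "x \<in> S0" "x \<notin> M" using Msub by blast
  have zM: "z \<in> M" using z_ideal[OF Mid] .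
  have "(x, z) \<in> rees S0" unfolding rees_def using x zS0 S0D by blast
  moreover have "(x, z) \<notin> theta" unfolding theta_def using x zM uN vN by blast
  ultimately show False using \<open>rees S0 \<subseteq> theta\<close> by blast
qed

end

theorem mainTheorem8:
  fixes S :: "'a set" and m :: "'a \<Rightarrow> 'a \<Rightarrow> 'a"
  assumes "finite S"
  shows "\<not> T2R S m"
proof
  assume "T2R S m"
  then obtain S0 z u v where d: "delta_semigroup S m" and
    h: "S = S0 \<union> {u, v}" "S0 \<inter> {u, v} = {}" "u \<noteq> v"
       "ideal_on S m S0" "nil_with_zero S0 m z" "\<exists>x\<in>S0. x \<noteq> z"
       "\<forall>x\<in>{u, v}. \<forall>y\<in>{u, v}. m x y = y"
    unfolding T2R_def by blast
  have sg: "semigroup_on S m" using d unfolding delta_semigroup_def by blast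
  have dl: "\<And>R1 R2. congruence_on S m R1 \<Longrightarrow> congruence_on S m R2 \<Longrightarrow> R1 \<subseteq> R2 \<or> R2 \<subseteq> R1"
    using d unfolding delta_semigroup_def by blast
  interpret t2rctx S m S0 z u v
    using assms sg dl h by unfold_locales blast+
  obtain M where M: "ideal_on S m M" "M \<subset> S0" "\<And>I. ideal_on S m I \<Longrightarrow> I \<subset> S0 \<Longrightarrow> I \<subseteq> M"
    using exM by blast
  interpret t2rM S m S0 z u v M
    using M by unfold_locales blast+
  show False using contra .
qed

end
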